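(* Let $\alpha, \delta \in (0,1)$ and $\epsilon > 0$. Let $\mathcal{T}_\mathrm{cal}$ be a calibration set of size $n_\mathrm{cal}$ such that $\min_{j = 1, \ldots, K} I_{(1+\epsilon)\mu_j}(a_j, b_j) \geq 1 - \frac{\delta}{K^2}$, where $a_j = \lfloor (n_\mathrm{cal}+1)\frac{\alpha j}{C(K)K}\rfloor$, $b_j = (n_\mathrm{cal}+1) - a_j$, $\mu_j = \frac{a_j}{a_j+b_j}$, $C(K) = (1+\epsilon)\sum_{j=1}^K \frac{1}{j}$, and $I_x(a,b)$ is the regularized incomplete beta function (the CDF of a $\mathrm{Beta}(a,b)$ distribution). Then, for a new input $X_\mathrm{test}$ and an ML model $f(\mathbf{W},\cdot)$, the probability of incorrectly declaring $X_\mathrm{test}$ as OOD conditioned on $\mathcal{T}_\mathrm{cal}$ using the BH-based test below satisfies \[ \mathrm{P}_\mathrm{F}(\mathcal{T}_\mathrm{cal}) = \mathrm{P}_{\mathrm{H}_0}(\text{declare OOD} \mid \mathcal{T}_\mathrm{cal}) \leq \alpha \] with probability at least $1-\delta$ (over the draw of $\mathcal{T}_\mathrm{cal}$).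
   Context: Setting: $(X,Y)\sim \mathrm{P}_{X,Y}$, ML model $f(\mathbf{W},\cdot)$ with prediction $\hat{Y} = f(\mathbf{W},X)$; the in-distribution is $\mathrm{P}_{X,\hat{Y}} = \mathrm{P}_X \times \mathrm{P}_{\hat{Y}\mid X}$. There are $K$ scalar score functions $s^1,\ldots,s^K$ (depending on the ML model) with scores $T^i = s^i(X)$, which may have arbitrary dependence among them. The null hypothesis $\mathrm{H}_0$ (in-distribution) is that all $\mathrm{H}_{0,i}: T^i_\mathrm{test}\sim \mathrm{P}^i$ hold, where $\mathrm{P}^i$ is the distribution of the $i$-th score for in-distribution inputs. The calibration set $\mathcal{T}_\mathrm{cal}$ consists of in-distribution samples, $X_\mathrm{test}$ is independent of $\mathcal{T}_\mathrm{cal}$, and scores have continuous distributions. The test: compute conformal p-values $\hat{Q}^i = \frac{1 + |\{j \in \mathcal{T}_\mathrm{cal} : T^i_j \geq T^i_\mathrm{test}\}|}{1 + n_\mathrm{cal}}$, order them as $\hat{Q}^{(1)}\le\cdots\le\hat{Q}^{(K)}$, let $m = \max\{i : \hat{Q}^{(i)} \leq \frac{\alpha i}{C(K)K}\}$ with $C(K) = (1+\epsilon)\sum_{j=1}^K \frac{1}{j}$, and declare OOD if $m \geq 1$. *)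

theory Defs
  imports "HOL-Probability.Probability"
begin

text \<open>Degenerate case a = 0:
Beta(0,b) is the point mass at 0, so its CDF is 1 for x >= 0.\<close>
definition reg_inc_beta :: "real \<Rightarrow> nat \<Rightarrow> nat \<Rightarrow> real" where
  "reg_inc_beta x a b =
     (if x < 0 then 0
      else if a = 0 then 1
      else if 1 \<le> x then 1
      else (LBINT t=0..x. t powr (real a - 1) * (1 - t) powr (real b - 1))
           / Beta (real a) (real b))"

definition CK :: "real \<Rightarrow> nat \<Rightarrow> real" where
  "CK eps K = (1 + eps) * (\<Sum>j=1..K. 1 / real j)"

definition a_coef :: "real \<Rightarrow> real \<Rightarrow> nat \<Rightarrow> nat \<Rightarrow> nat \<Rightarrow> nat" where
  "a_coef alpha eps K n j = nat \<lfloor>real (n + 1) * (alpha * real j / (CK eps K * real K))\<rfloor>"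

definition b_coef :: "real \<Rightarrow> real \<Rightarrow> nat \<Rightarrow> nat \<Rightarrow> nat \<Rightarrow> nat" where
  "b_coef alpha eps K n j = (n + 1) - a_coef alpha eps K n j"

definition mu_coef :: "real \<Rightarrow> real \<Rightarrow> nat \<Rightarrow> nat \<Rightarrow> nat \<Rightarrow> real" where
  "mu_coef alpha eps K n j =
     real (a_coef alpha eps K n j) / real (a_coef alpha eps K n j + b_coef alpha eps K n j)"

definition conf_pval :: "(nat \<Rightarrow> 'x \<Rightarrow> real) \<Rightarrow> nat \<Rightarrow> (nat \<Rightarrow> 'x) \<Rightarrow> nat \<Rightarrow> 'x \<Rightarrow> real" where
  "conf_pval s n cal i x =
     (1 + real (card {j. j < n \<and> s i (cal j) \<ge> s i x})) / (1 + real n)"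

text \<open>BH-based test: with sorted p-values Q^(1) <= ... <= Q^(K),
m = max{i : Q^(i) <= alpha i/(C(K) K)}; declare OOD iff m >= 1, i.e. iff
some i in {1..K} satisfies the inequality.\<close>
definition bh_declare_ood ::
  "real \<Rightarrow> real \<Rightarrow> nat \<Rightarrow> (nat \<Rightarrow> 'x \<Rightarrow> real) \<Rightarrow> nat \<Rightarrow> (nat \<Rightarrow> 'x) \<Rightarrow> 'x \<Rightarrow> bool" where
  "bh_declare_ood alpha eps K s n cal x =
     (let Qs = sort (map (\<lambda>i. conf_pval s n cal i x) [0..<K])
      in \<exists>i\<in>{1..K}. Qs ! (i - 1) \<le> alpha * real i / (CK eps K * real K))"

end

theory Submission
  imports Defs
begin

definition bt :: "nat \<Rightarrow> nat \<Rightarrow> real \<Rightarrow> real" where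
  "bt m j x = (\<Sum>k\<in>{Suc j..Suc m}. real (Suc m choose k) * x^k * (1-x)^(Suc m - k))"

lemma bt_deriv_aux:
  assumes "d \<le> m"
  shows "(bt m (m - d) has_real_derivative
           (real (Suc m) * real (m choose (m - d)) * x^(m - d) * (1-x)^d)) (at x)"
  using assms
proof (induction d)
  case 0
  have e: "bt m m = (\<lambda>x. x^Suc m)" by (auto simp: bt_def fun_eq_iff)
  have "((\<lambda>x. x^Suc m) has_real_derivative (real (Suc m) * x^m)) (at x)"
    by (rule derivative_eq_intros refl)+ simp
  then show ?case using e by simp
next
  case (Suc d)
  define j where "j = m - Suc d"
  have jm: "m - d = Suc j" using Suc.prems unfolding j_def by auto
  have IH: "(bt m (Suc j) has_real_derivative
           (real (Suc m) * real (m choose Suc j) * x^(Suc j) * (1-x)^d)) (at x)"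
    using Suc jm by auto
  have dd: "Suc m - Suc j = Suc d" "m - j = Suc d" using Suc.prems jm by auto
  have split: "bt m j = (\<lambda>x. bt m (Suc j) x + real (Suc m choose Suc j) * x^Suc j * (1-x)^(Suc d))"
    unfolding bt_def fun_eq_iff
  proof
    fix x :: real
    have "{Suc j..Suc m} = insert (Suc j) {Suc (Suc j)..Suc m}" using jm Suc.prems by auto
    then show "(\<Sum>k = Suc j..Suc m. real (Suc m choose k) * x ^ k * (1 - x) ^ (Suc m - k)) =
         (\<Sum>k = Suc (Suc j)..Suc m. real (Suc m choose k) * x ^ k * (1 - x) ^ (Suc m - k)) +
         real (Suc m choose Suc j) * x ^ Suc j * (1 - x) ^ Suc d"
      using dd by simp
  qed
  have c1: "real (Suc m choose Suc j) * real (Suc j) = real (Suc m) * real (m choose j)"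
    by (metis Suc_times_binomial of_nat_mult mult.commute)
  have c2: "real (Suc m choose Suc j) * real (Suc d) = real (Suc m) * real (m choose Suc j)"
  proof -
    have "(Suc m choose Suc j) * (Suc m - Suc j) = Suc m * (m choose Suc j)"
      using binomial_absorb_comp[of "Suc m" "Suc j"] by (simp add: mult.commute)
    then show ?thesis using dd by (metis of_nat_mult)
  qed
  have "(bt m j has_real_derivative
     (real (Suc m) * real (m choose Suc j) * x^(Suc j) * (1-x)^d
      + real (Suc m choose Suc j) * (real (Suc j) * x^j * (1-x)^Suc d
           - x^Suc j * (real (Suc d) * (1-x)^d)))) (at x)"
  proof -
    have t: "((\<lambda>x. real (Suc m choose Suc j) * x^Suc j * (1-x)^(Suc d)) has_real_derivative
       real (Suc m choose Suc j) * (real (Suc j) * x^j * (1-x)^Suc d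
           - x^Suc j * (real (Suc d) * (1-x)^d))) (at x)"
    proof -
      have p1: "((\<lambda>x. x^Suc j) has_real_derivative real (Suc j) * x^j) (at x)"
        using DERIV_pow[of "Suc j" x] by simp
      have p2: "((\<lambda>x. (1-x)^Suc d) has_real_derivative - (real (Suc d) * (1-x)^d)) (at x)"
      proof -
        have "((\<lambda>x. 1-x) has_real_derivative -1) (at x)"
          using DERIV_diff[OF DERIV_const DERIV_ident] by simp
        from DERIV_power[OF this, of "Suc d"] show ?thesis by simp
      qed
      have "((\<lambda>x. real (Suc m choose Suc j) * (x^Suc j * (1-x)^(Suc d))) has_real_derivative
         real (Suc m choose Suc j) * (x^Suc j * (- (real (Suc d) * (1-x)^d)) + real (Suc j) * x^j * (1-x)^Suc d)) (at x)"
        by (intro DERIV_cmult) (rule DERIV_mult'[OF p1 p2])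
      then show ?thesis by (simp add: right_diff_distrib distrib_left mult.assoc)
    qed
    show ?thesis unfolding split by (rule DERIV_add[OF IH t])
  qed
  moreover have "real (Suc m) * real (m choose Suc j) * x^(Suc j) * (1-x)^d
      + real (Suc m choose Suc j) * (real (Suc j) * x^j * (1-x)^Suc d
           - x^Suc j * (real (Suc d) * (1-x)^d))
      = real (Suc m) * real (m choose j) * x^j * (1-x)^(Suc d)"
  proof -
    have "real (Suc m choose Suc j) * (real (Suc j) * x^j * (1-x)^Suc d
           - x^Suc j * (real (Suc d) * (1-x)^d))
        = (real (Suc m choose Suc j) * real (Suc j)) * x^j * (1-x)^Suc d
          - (real (Suc m choose Suc j) * real (Suc d)) * x^Suc j * (1-x)^d"
      by (simp add: right_diff_distrib mult.assoc)
    also have "\<dots> = real (Suc m) * real (m choose j) * x^j * (1-x)^Suc d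
          - real (Suc m) * real (m choose Suc j) * x^Suc j * (1-x)^d"
      using c1 c2 by simp
    finally show ?thesis by (simp add: mult.commute mult.left_commute mult.assoc)
  qed
  ultimately show ?case unfolding j_def[symmetric] by simp
qed

lemma bt_deriv:
  assumes "j \<le> m"
  shows "(bt m j has_real_derivative
           (real (Suc m) * real (m choose j) * x^j * (1-x)^(m-j))) (at x)"
  using bt_deriv_aux[of "m - j" m x] assms by simp

lemma bt_zero: "bt m j 0 = 0"
  by (simp add: bt_def)

lemma bt_integral:
  assumes "j \<le> m" "0 \<le> c"
  shows "(LBINT t=0..c. t^j * (1-t)^(m-j)) = bt m j c / (real (Suc m) * real (m choose j))"
proof -
  define C where "C = real (Suc m) * real (m choose j)"
  have Cpos: "C > 0" using assms by (simp add: C_def)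
  have "(LBINT t=ereal 0..ereal c. t^j * (1-t)^(m-j)) = bt m j c / C - bt m j 0 / C"
  proof (rule interval_integral_FTC_finite[where F="\<lambda>x. bt m j x / C"])
    show "continuous_on {min 0 c..max 0 c} (\<lambda>t. t ^ j * (1 - t) ^ (m - j))"
      by (intro continuous_intros)
    fix x :: real
    have "((\<lambda>x. bt m j x / C) has_real_derivative (C * x^j * (1-x)^(m-j)) / C) (at x)"
      using bt_deriv[OF assms(1), of x] unfolding C_def
      by (intro DERIV_cdivide) (simp add: mult.assoc)
    then have "((\<lambda>x. bt m j x / C) has_real_derivative x^j * (1-x)^(m-j)) (at x)"
      using Cpos by (simp add: mult.assoc)
    then show "((\<lambda>x. bt m j x / C) has_vector_derivative x ^ j * (1 - x) ^ (m - j))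
         (at x within {min 0 c..max 0 c})"
      by (simp add: has_real_derivative_iff_has_vector_derivative[symmetric] has_field_derivative_at_within)
  qed
  then show ?thesis by (simp add: bt_zero C_def zero_ereal_def)
qed

lemma Beta_nat:
  "Beta (real (Suc j)) (real (Suc l)) = 1 / (real (Suc (j + l)) * real ((j + l) choose j))"
proof -
  have g1: "Gamma (real (Suc j)) = fact j" using Gamma_fact[of j] by (simp add: add.commute)
  have g2: "Gamma (real (Suc l)) = fact l" using Gamma_fact[of l] by (simp add: add.commute)
  have g3: "Gamma (real (Suc j) + real (Suc l)) = fact (Suc (j + l))"
    using Gamma_fact[of "Suc (j+l)"] by (simp add: add.commute add.left_commute)
  have b: "real ((j + l) choose j) = fact (j+l) / (fact j * fact l)"
    using binomial_fact[of j "j+l"] by simp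
  have f: "(fact (Suc (j + l)) :: real) = real (Suc (j + l)) * fact (j + l)"
    by (rule fact_Suc)
  have pos: "(fact j :: real) > 0" "(fact l :: real) > 0" "(fact (j+l) :: real) > 0" by auto
  have "Beta (real (Suc j)) (real (Suc l)) = fact j * fact l / (real (Suc (j + l)) * fact (j + l))"
    unfolding Beta_def g1 g2 g3 f ..
  also have "\<dots> = 1 / (real (Suc (j + l)) * (fact (j+l) / (fact j * fact l)))"
    using pos by (simp add: divide_simps)
  finally show ?thesis unfolding b .
qed

lemma reg_inc_beta_bt:
  assumes "j \<le> m" "0 < c" "c < 1"
  shows "reg_inc_beta c (Suc j) (Suc (m - j)) = bt m j c"
proof -
  have "(LBINT t=0..c. t powr (real (Suc j) - 1) * (1 - t) powr (real (Suc (m - j)) - 1))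
      = (LBINT t=0..c. t^j * (1-t)^(m-j))"
  proof (rule interval_integral_cong)
    fix x assume "x \<in> einterval (min 0 (ereal c)) (max 0 (ereal c))"
    then have x: "0 < x" "x < 1" using assms by (auto simp: einterval_def)
    have e1: "real (Suc j) - 1 = real j" by simp
    have e2: "real (Suc (m - j)) - 1 = real (m - j)" by simp
    have "x powr real j = x ^ j" using x by (simp add: powr_realpow)
    moreover have "(1 - x) powr real (m - j) = (1 - x) ^ (m - j)" using x by (subst powr_realpow) simp_all
    ultimately show "x powr (real (Suc j) - 1) * (1 - x) powr (real (Suc (m - j)) - 1) = x ^ j * (1 - x) ^ (m - j)"
      unfolding e1 e2 by simp
  qed
  moreover have "Beta (real (Suc j)) (real (Suc (m - j))) = 1 / (real (Suc m) * real (m choose j))"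
    using Beta_nat[of j "m - j"] assms by simp
  moreover have "reg_inc_beta c (Suc j) (Suc (m - j)) =
     (LBINT t=0..c. t powr (real (Suc j) - 1) * (1 - t) powr (real (Suc (m - j)) - 1))
       / Beta (real (Suc j)) (real (Suc (m - j)))"
    using assms unfolding reg_inc_beta_def by simp
  moreover have "(LBINT t=0..c. t^j * (1-t)^(m-j)) = bt m j c / (real (Suc m) * real (m choose j))"
    using bt_integral[OF assms(1), of c] assms by simp
  moreover have "real (Suc m) * real (m choose j) > 0" using assms by simp
  ultimately show ?thesis using assms(1) by simp
qed

lemma fpps_interp:
  assumes "prob_space M"
  shows "finite_product_prob_space (\<lambda>_. M) {..<n::nat}"
proof -
  interpret prob_space M by fact
  show ?thesis
    by (intro finite_product_prob_space.intro finite_product_sigma_finite.intro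
        product_prob_space.intro product_sigma_finite.intro finite_product_sigma_finite_axioms.intro
        product_prob_space_axioms.intro) (auto intro: sigma_finite_measure_axioms assms finite_lessThan)
qed

lemma count_set_eq:
  fixes M :: "'x measure"
  shows "{cal \<in> space (PiM {..<n} (\<lambda>_. M)). a \<le> card {k. k < n \<and> cal k \<in> Y}}
       = (\<Union>S\<in>{S. S \<subseteq> {..<n} \<and> a \<le> card S}.
            PiE {..<n} (\<lambda>k. if k \<in> S then Y \<inter> space M else space M - Y))" (is "?L = ?R")
proof
  show "?L \<subseteq> ?R"
  proof
    fix cal assume c: "cal \<in> ?L"
    define S where "S = {k. k < n \<and> cal k \<in> Y}"
    have sp: "cal \<in> PiE {..<n} (\<lambda>_. space M)" using c by (simp add: space_PiM)
    have "S \<subseteq> {..<n}" "a \<le> card S" using c by (auto simp: S_def)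
    moreover have "cal \<in> PiE {..<n} (\<lambda>k. if k \<in> S then Y \<inter> space M else space M - Y)"
      unfolding PiE_iff
    proof (intro conjI ballI)
      fix k assume k: "k \<in> {..<n}"
      then have "cal k \<in> space M" using sp by (auto simp: PiE_iff)
      then show "cal k \<in> (if k \<in> S then Y \<inter> space M else space M - Y)" using k by (auto simp: S_def)
    next
      show "cal \<in> extensional {..<n}" using sp by (simp add: PiE_iff)
    qed
    ultimately show "cal \<in> ?R" by blast
  qed
next
  show "?R \<subseteq> ?L"
  proof
    fix cal assume "cal \<in> ?R"
    then obtain S where S0: "S \<in> {S. S \<subseteq> {..<n} \<and> a \<le> card S}"
      and c: "cal \<in> PiE {..<n} (\<lambda>k. if k \<in> S then Y \<inter> space M else space M - Y)" by (rule UN_E)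
    from S0 have S: "S \<subseteq> {..<n}" "a \<le> card S" by simp_all
    have ck: "cal k \<in> (if k \<in> S then Y \<inter> space M else space M - Y)" if "k < n" for k
      using PiE_mem[OF c, of k] that by simp
    have "{k. k < n \<and> cal k \<in> Y} = S"
    proof (intro set_eqI iffI)
      fix k assume "k \<in> {k. k < n \<and> cal k \<in> Y}"
      then have "k < n" "cal k \<in> Y" by simp_all
      then show "k \<in> S" using ck[of k] by (cases "k \<in> S") simp_all
    next
      fix k assume "k \<in> S"
      then have "k < n" using S by auto
      then show "k \<in> {k. k < n \<and> cal k \<in> Y}" using ck[of k] \<open>k \<in> S\<close> by simp
    qed
    moreover have "cal \<in> space (PiM {..<n} (\<lambda>_. M))"
      unfolding space_PiM PiE_iff
    proof (intro conjI ballI)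
      fix k assume "k \<in> {..<n}"
      then show "cal k \<in> space M" using ck[of k] by (cases "k \<in> S") simp_all
    next
      show "cal \<in> extensional {..<n}" using c by (simp add: PiE_iff)
    qed
    ultimately show "cal \<in> ?L" using S(2) by simp
  qed
qed

lemma count_binom:
  fixes M :: "'x measure"
  assumes "prob_space M" "Y \<in> sets M"
  shows "{cal \<in> space (PiM {..<n} (\<lambda>_. M)). a \<le> card {k. k < n \<and> cal k \<in> Y}} \<in> sets (PiM {..<n} (\<lambda>_. M))"
    and "measure (PiM {..<n} (\<lambda>_. M)) {cal \<in> space (PiM {..<n} (\<lambda>_. M)). a \<le> card {k. k < n \<and> cal k \<in> Y}}
       = (\<Sum>m=a..n. real (n choose m) * measure M Y ^ m * (1 - measure M Y) ^ (n - m))"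
proof -
  interpret MP: prob_space M by fact
  interpret P: finite_product_prob_space "\<lambda>_. M" "{..<n}" using fpps_interp[OF assms(1)] .
  define p where "p = measure M Y"
  define A where "A S = PiE {..<n} (\<lambda>k. if k \<in> S then Y \<inter> space M else space M - Y)" for S
  define SS where "SS = {S. S \<subseteq> {..<n} \<and> a \<le> card S}"
  have finSS: "finite SS" unfolding SS_def by (rule finite_subset[of _ "Pow {..<n}"]) auto
  have Asets: "A S \<in> sets (PiM {..<n} (\<lambda>_. M))" for S
    unfolding A_def by (intro sets_PiM_I_finite) (auto simp: assms)
  have eq: "{cal \<in> space (PiM {..<n} (\<lambda>_. M)). a \<le> card {k. k < n \<and> cal k \<in> Y}} = (\<Union>S\<in>SS. A S)"
    unfolding A_def SS_def by (rule count_set_eq)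
  show "{cal \<in> space (PiM {..<n} (\<lambda>_. M)). a \<le> card {k. k < n \<and> cal k \<in> Y}} \<in> sets (PiM {..<n} (\<lambda>_. M))"
    unfolding eq using finSS Asets by auto
  have disj: "disjoint_family_on A SS"
  unfolding disjoint_family_on_def
  proof (intro ballI impI)
    fix S T assume "S \<in> SS" "T \<in> SS" "S \<noteq> T"
    then obtain k where k: "k < n" "(k \<in> S) \<noteq> (k \<in> T)" unfolding SS_def by blast
    show "A S \<inter> A T = {}"
    proof (rule ccontr)
      assume "A S \<inter> A T \<noteq> {}"
      then obtain cal where "cal \<in> A S" "cal \<in> A T" by blast
      then have "cal k \<in> (if k \<in> S then Y \<inter> space M else space M - Y)"
                "cal k \<in> (if k \<in> T then Y \<inter> space M else space M - Y)"
        using k unfolding A_def by (auto simp: PiE_def Pi_def)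
      then show False using k by (auto split: if_splits)
    qed
  qed
  have mA: "measure (PiM {..<n} (\<lambda>_. M)) (A S) = p ^ card S * (1 - p) ^ (n - card S)"
    if "S \<in> SS" for S
  proof -
    have S: "S \<subseteq> {..<n}" using that by (auto simp: SS_def)
    have "measure (PiM {..<n} (\<lambda>_. M)) (A S) =
       (\<Prod>k\<in>{..<n}. measure M (if k \<in> S then Y \<inter> space M else space M - Y))"
      unfolding A_def by (rule P.finite_measure_PiM_emb) (auto simp: assms)
    also have "\<dots> = (\<Prod>k\<in>{..<n}. if k \<in> S then p else 1 - p)"
      using assms(2) by (intro prod.cong) (auto simp: p_def MP.prob_compl Int_absorb2 sets.sets_into_space)
    also have "\<dots> = p ^ card S * (1 - p) ^ card ({..<n} - S)"
      using S by (subst prod.If_cases) (simp_all add: inf.absorb2 Diff_eq[symmetric])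
    also have "card ({..<n} - S) = n - card S" using S by (simp add: card_Diff_subset finite_subset)
    finally show ?thesis .
  qed
  have "measure (PiM {..<n} (\<lambda>_. M)) (\<Union>S\<in>SS. A S) = (\<Sum>S\<in>SS. measure (PiM {..<n} (\<lambda>_. M)) (A S))"
    using finSS Asets disj by (intro P.finite_measure_finite_Union) auto
  also have "\<dots> = (\<Sum>S\<in>SS. p ^ card S * (1 - p) ^ (n - card S))"
    using mA by (rule sum.cong[OF refl])
  also have "\<dots> = (\<Sum>m\<in>{a..n}. \<Sum>S\<in>{S\<in>SS. card S = m}. p ^ card S * (1 - p) ^ (n - card S))"
  proof (rule sum.group[symmetric])
    show "finite SS" by fact
    show "finite {a..n}" by simp
    show "card ` SS \<subseteq> {a..n}"
    proof
      fix x assume "x \<in> card ` SS"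
      then obtain S where "S \<in> SS" "x = card S" by blast
      then show "x \<in> {a..n}" unfolding SS_def
        using card_mono[of "{..<n}" S] by auto
    qed
  qed
  also have "\<dots> = (\<Sum>m\<in>{a..n}. real (n choose m) * p ^ m * (1 - p) ^ (n - m))"
  proof (rule sum.cong[OF refl])
    fix m assume m: "m \<in> {a..n}"
    have "{S\<in>SS. card S = m} = {S. S \<subseteq> {..<n} \<and> card S = m}" using m by (auto simp: SS_def)
    then have "card {S\<in>SS. card S = m} = n choose m" using n_subsets[of "{..<n}" m] by simp
    moreover have "(\<Sum>S\<in>{S\<in>SS. card S = m}. p ^ card S * (1 - p) ^ (n - card S))
        = (\<Sum>S\<in>{S\<in>SS. card S = m}. p ^ m * (1 - p) ^ (n - m))" by (rule sum.cong) auto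
    ultimately show "(\<Sum>S\<in>{S\<in>SS. card S = m}. p ^ card S * (1 - p) ^ (n - card S))
        = real (n choose m) * p ^ m * (1 - p) ^ (n - m)" by simp
  qed
  finally show "measure (PiM {..<n} (\<lambda>_. M)) {cal \<in> space (PiM {..<n} (\<lambda>_. M)). a \<le> card {k. k < n \<and> cal k \<in> Y}}
       = (\<Sum>m=a..n. real (n choose m) * measure M Y ^ m * (1 - measure M Y) ^ (n - m))"
    unfolding eq p_def .
qed

definition surv :: "'x measure \<Rightarrow> ('x \<Rightarrow> real) \<Rightarrow> real \<Rightarrow> real" where
  "surv M f t = measure M {x \<in> space M. t \<le> f x}"

lemma surv_antimono:
  assumes "prob_space M" "f \<in> borel_measurable M" "t \<le> u"
  shows "surv M f u \<le> surv M f t"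
proof -
  interpret prob_space M by fact
  show ?thesis unfolding surv_def
    using assms by (intro finite_measure_mono) auto
qed

lemma surv_measurable:
  assumes "prob_space M" "f \<in> borel_measurable M"
  shows "surv M f \<in> borel_measurable borel"
proof -
  have "mono (\<lambda>t. - surv M f t)"
    by (auto simp: mono_def intro: surv_antimono[OF assms])
  then have "(\<lambda>t. - surv M f t) \<in> borel_measurable borel" by (rule borel_measurable_mono)
  then have "(\<lambda>t. - (- surv M f t)) \<in> borel_measurable borel" by measurable
  then show ?thesis by simp
qed

lemma pit_set_sets:
  assumes "prob_space M" "f \<in> borel_measurable M"
  shows "{x \<in> space M. surv M f (f x) \<le> c} \<in> sets M"
proof -
  have [measurable]: "surv M f \<in> borel_measurable borel" using surv_measurable[OF assms] .
  have [measurable]: "f \<in> borel_measurable M" by fact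
  show ?thesis by measurable
qed

lemma pit:
  assumes "prob_space M" "f \<in> borel_measurable M"
    and atom: "\<And>t. measure M {x \<in> space M. f x = t} = 0"
    and "0 < c" "c < 1"
  shows "c \<le> measure M {x \<in> space M. surv M f (f x) \<le> c}"
proof -
  interpret prob_space M by fact
  note fm[measurable] = assms(2)
  define S where "S = surv M f"
  have anti: "t \<le> u \<Longrightarrow> S u \<le> S t" for t u unfolding S_def by (rule surv_antimono[OF assms(1,2)])
  show ?thesis
  proof (cases "\<forall>t. S t \<le> c")
    case True
    then have "{x \<in> space M. surv M f (f x) \<le> c} = space M" by (auto simp: S_def)
    then show ?thesis using \<open>c < 1\<close> by (simp add: prob_space)
  next
    case False
    then obtain t0 where t0: "c < S t0" by (auto simp: not_le)
    define U where "U = {t. S t \<le> c}"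
    have lb: "u \<in> U \<Longrightarrow> t0 \<le> u" for u
    proof (rule ccontr)
      assume u: "u \<in> U" "\<not> t0 \<le> u"
      then have "S t0 \<le> S u" using anti[of u t0] by simp
      then show False using u t0 by (simp add: U_def)
    qed
    have ne: "U \<noteq> {}"
    proof -
      define A where "A m = {x \<in> space M. real m \<le> f x}" for m :: nat
      have "(\<lambda>m. measure M (A m)) \<longlonglongrightarrow> measure M (\<Inter>m. A m)"
        by (rule finite_Lim_measure_decseq) (auto simp: A_def decseq_def)
      moreover have "(\<Inter>m. A m) = {}"
      proof (rule ccontr)
        assume "(\<Inter>m. A m) \<noteq> {}"
        then obtain x where "\<And>m. x \<in> A m" by blast
        then have "\<And>m. real m \<le> f x" by (auto simp: A_def)
        moreover obtain m where "f x < real m" using reals_Archimedean2[of "f x"] by blast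
        ultimately show False using not_le by blast
      qed
      ultimately have "(\<lambda>m. measure M (A m)) \<longlonglongrightarrow> 0" by simp
      then have "eventually (\<lambda>m. measure M (A m) < c) sequentially" using \<open>0 < c\<close>
        by (rule order_tendstoD(2))
      then obtain m where "measure M (A m) < c" by (auto simp: eventually_sequentially)
      then have "real m \<in> U" by (simp add: U_def S_def surv_def A_def)
      then show ?thesis by blast
    qed
    define ts where "ts = Inf U"
    have bdd: "bdd_below U" using lb by (auto simp: bdd_below_def)
    have above: "t \<in> U" if tt: "ts < t" for t
    proof -
      have "\<exists>u\<in>U. u < t" using cInf_lessD[OF ne, of t] tt unfolding ts_def by simp
      then obtain u where "u \<in> U" "u < t" by blast
      then show ?thesis using anti[of u t] by (auto simp: U_def)
    qed
    have below: "c < S t" if "t < ts" for t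
    proof (rule ccontr)
      assume "\<not> c < S t"
      then have "t \<in> U" by (auto simp: U_def)
      then have "ts \<le> t" unfolding ts_def using bdd by (rule cInf_lower)
      then show False using that by simp
    qed
    have Sts: "c \<le> S ts"
    proof -
      define B where "B m = {x \<in> space M. ts - 1 / (real m + 1) \<le> f x}" for m :: nat
      have dec: "decseq B"
        unfolding decseq_def B_def
      proof (intro allI impI subsetI)
        fix m k x assume "m \<le> k" "x \<in> {x \<in> space M. ts - 1 / (real k + 1) \<le> f x}"
        moreover have "1 / (real k + 1) \<le> 1 / (real m + 1)"
          using \<open>m \<le> k\<close> by (intro divide_left_mono) auto
        ultimately show "x \<in> {x \<in> space M. ts - 1 / (real m + 1) \<le> f x}" by auto
      qed
      have "(\<lambda>m. measure M (B m)) \<longlonglongrightarrow> measure M (\<Inter>m. B m)"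
      proof (rule finite_Lim_measure_decseq[OF _ dec])
        show "range B \<subseteq> sets M" by (auto simp: B_def)
      qed
      moreover have "(\<Inter>m. B m) = {x \<in> space M. ts \<le> f x}"
      proof
        show "{x \<in> space M. ts \<le> f x} \<subseteq> (\<Inter>m. B m)"
        proof
          fix x assume x: "x \<in> {x \<in> space M. ts \<le> f x}"
          have "x \<in> B m" for m
          proof -
            have "0 \<le> 1 / (real m + 1)" by simp
            moreover have "ts \<le> f x" using x by simp
            ultimately have "ts - 1 / (real m + 1) \<le> f x" by linarith
            then show ?thesis using x by (simp add: B_def)
          qed
          then show "x \<in> (\<Inter>m. B m)" by blast
        qed
        show "(\<Inter>m. B m) \<subseteq> {x \<in> space M. ts \<le> f x}"
        proof
          fix x assume x: "x \<in> (\<Inter>m. B m)"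
          then have xs: "x \<in> space M" by (auto simp: B_def)
          show "x \<in> {x \<in> space M. ts \<le> f x}"
          proof (rule ccontr)
            assume "x \<notin> {x \<in> space M. ts \<le> f x}"
            then have "f x < ts" using xs by auto
            then have "0 < ts - f x" by simp
            then obtain m where m0: "1 / real (Suc m) < ts - f x" by (rule nat_approx_posE)
            then have m: "1 / (real m + 1) < ts - f x" by (simp add: add.commute)
            have "x \<in> B m" using x by auto
            then show False using m by (auto simp: B_def)
          qed
        qed
      qed
      moreover have "c \<le> measure M (B m)" for m
      proof -
        have "c < S (ts - 1 / (real m + 1))" by (rule below) simp
        then show ?thesis by (simp add: S_def surv_def B_def)
      qed
      ultimately show ?thesis unfolding S_def surv_def
        by (intro LIMSEQ_le_const[of "\<lambda>m. measure M (B m)"]) auto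
    qed
    have "{x \<in> space M. ts < f x} \<subseteq> {x \<in> space M. surv M f (f x) \<le> c}"
      using above by (auto simp: U_def S_def)
    then have "measure M {x \<in> space M. ts < f x} \<le> measure M {x \<in> space M. surv M f (f x) \<le> c}"
      by (intro finite_measure_mono pit_set_sets[OF assms(1,2)])
    moreover have "measure M {x \<in> space M. ts < f x} = S ts"
    proof -
      have "{x \<in> space M. ts \<le> f x} = {x \<in> space M. ts < f x} \<union> {x \<in> space M. f x = ts}" by auto
      then have "S ts = measure M {x \<in> space M. ts < f x} + measure M {x \<in> space M. f x = ts}"
        unfolding S_def surv_def by (subst finite_measure_Union[symmetric]) auto
      then show ?thesis using atom[of ts] by simp
    qed
    ultimately show ?thesis using Sts by simp
  qed
qed

lemma good_bound:
  fixes f :: "'x \<Rightarrow> real" and cal :: "nat \<Rightarrow> 'x"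
  assumes "prob_space M" "f \<in> borel_measurable M"
    and A: "a \<le> card {k. k < n \<and> surv M f (f (cal k)) \<le> c}" and c0: "0 \<le> c"
  shows "measure M {x \<in> space M. 1 + card {j. j < n \<and> f (cal j) \<ge> f x} \<le> a} \<le> c"
proof (cases "a = 0")
  case True
  then show ?thesis using c0 by simp
next
  case False
  interpret prob_space M by fact
  define AA where "AA = {k. k < n \<and> surv M f (f (cal k)) \<le> c}"
  have finA: "finite AA" unfolding AA_def by simp
  have A': "a \<le> card AA" using A unfolding AA_def .
  have neA: "AA \<noteq> {}"
  proof
    assume "AA = {}"
    then have "card AA = 0" by simp
    then show False using A' False by simp
  qed
  define t0 where "t0 = Min ((\<lambda>k. f (cal k)) ` AA)"
  have "t0 \<in> (\<lambda>k. f (cal k)) ` AA" unfolding t0_def using finA neA by (intro Min_in) auto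
  then obtain k0 where k0: "k0 \<in> AA" "t0 = f (cal k0)" by blast
  have t0le: "t0 \<le> f (cal k)" if "k \<in> AA" for k
    unfolding t0_def using finA that by (intro Min_le) auto
  have sub: "{x \<in> space M. 1 + card {j. j < n \<and> f (cal j) \<ge> f x} \<le> a} \<subseteq> {x \<in> space M. t0 \<le> f x}"
  proof
    fix x assume x: "x \<in> {x \<in> space M. 1 + card {j. j < n \<and> f (cal j) \<ge> f x} \<le> a}"
    show "x \<in> {x \<in> space M. t0 \<le> f x}"
    proof (rule ccontr)
      assume "x \<notin> {x \<in> space M. t0 \<le> f x}"
      then have lt: "f x < t0" using x by auto
      have "AA \<subseteq> {j. j < n \<and> f (cal j) \<ge> f x}"
      proof
        fix k assume k: "k \<in> AA"
        then have "k < n" by (simp add: AA_def)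
        moreover have "f x \<le> f (cal k)" using t0le[OF k] lt by simp
        ultimately show "k \<in> {j. j < n \<and> f (cal j) \<ge> f x}" by simp
      qed
      then have "card AA \<le> card {j. j < n \<and> f (cal j) \<ge> f x}" by (intro card_mono) auto
      moreover have "1 + card {j. j < n \<and> f (cal j) \<ge> f x} \<le> a" using x by simp
      ultimately show False using A' by simp
    qed
  qed
  have "measure M {x \<in> space M. 1 + card {j. j < n \<and> f (cal j) \<ge> f x} \<le> a}
      \<le> measure M {x \<in> space M. t0 \<le> f x}"
    using sub assms(2) by (intro finite_measure_mono) auto
  also have "\<dots> = surv M f t0" by (simp add: surv_def)
  also have "\<dots> \<le> c" using k0 by (simp add: AA_def)
  finally show ?thesis .
qed

lemma sorted_count:
  fixes xs :: "real list"
  assumes "sorted xs" "k < length xs" "xs ! k \<le> t"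
  shows "Suc k \<le> length (filter (\<lambda>v. v \<le> t) xs)"
proof -
  have all: "\<forall>v\<in>set (take (Suc k) xs). v \<le> t"
  proof
    fix v assume "v \<in> set (take (Suc k) xs)"
    then obtain l where l: "l < length (take (Suc k) xs)" "v = take (Suc k) xs ! l"
      by (auto simp: in_set_conv_nth)
    then have "l \<le> k" "v = xs ! l" by auto
    then have "v \<le> xs ! k" using assms by (simp add: sorted_nth_mono)
    then show "v \<le> t" using assms by simp
  qed
  have "length (filter (\<lambda>v. v \<le> t) (take (Suc k) xs)) = Suc k"
    using all assms(2) by (simp add: min_def)
  moreover have "length (filter (\<lambda>v. v \<le> t) (take (Suc k) xs)) \<le> length (filter (\<lambda>v. v \<le> t) xs)"
  proof -
    have "xs = take (Suc k) xs @ drop (Suc k) xs" by simp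
    then have "filter (\<lambda>v. v \<le> t) xs = filter (\<lambda>v. v \<le> t) (take (Suc k) xs) @ filter (\<lambda>v. v \<le> t) (drop (Suc k) xs)"
      by (metis filter_append)
    then show ?thesis by (metis le_add1 length_append)
  qed
  ultimately show ?thesis by simp
qed

lemma bh_count:
  fixes Q :: "nat \<Rightarrow> real"
  assumes "j \<in> {1..K}" "sort (map Q [0..<K]) ! (j - 1) \<le> t"
  shows "j \<le> card {i. i < K \<and> Q i \<le> t}"
proof -
  let ?xs = "sort (map Q [0..<K])"
  have "Suc (j - 1) \<le> length (filter (\<lambda>v. v \<le> t) ?xs)"
    using assms by (intro sorted_count) auto
  moreover have "length (filter (\<lambda>v. v \<le> t) ?xs) = length (filter (\<lambda>v. v \<le> t) (map Q [0..<K]))"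
    by (metis mset_filter mset_sort size_mset)
  moreover have "length (filter (\<lambda>v. v \<le> t) (map Q [0..<K])) = card {i. i < K \<and> Q i \<le> t}"
  proof -
    have "{i. i < K \<and> map Q [0..<K] ! i \<le> t} = {i. i < K \<and> Q i \<le> t}" by auto
    then show ?thesis by (simp add: length_filter_conv_card)
  qed
  ultimately show ?thesis using assms by simp
qed

definition dw :: "nat \<Rightarrow> nat \<Rightarrow> real" where
  "dw K j = (if j < K then 1 / real j - 1 / real (Suc j) else 1 / real K)"

lemma dw_nonneg: "1 \<le> j \<Longrightarrow> 0 \<le> dw K j"
  by (auto simp: dw_def field_simps)

lemma tele:
  assumes "k \<le> K"
  shows "(\<Sum>j\<in>{k..<K}. 1 / real j - 1 / real (Suc j)) = 1 / real k - 1 / real K"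
  using assms
proof (induction K rule: dec_induct)
  case base
  then show ?case by simp
next
  case (step K)
  then show ?case by simp
qed

lemma dw_tail:
  assumes "1 \<le> k" "k \<le> K"
  shows "(\<Sum>j\<in>{k..K}. dw K j) = 1 / real k"
proof -
  have "{k..K} = insert K {k..<K}" using assms by auto
  then have "(\<Sum>j\<in>{k..K}. dw K j) = dw K K + (\<Sum>j\<in>{k..<K}. dw K j)" by simp
  also have "(\<Sum>j\<in>{k..<K}. dw K j) = (\<Sum>j\<in>{k..<K}. 1 / real j - 1 / real (Suc j))"
    by (intro sum.cong) (auto simp: dw_def)
  also have "\<dots> = 1 / real k - 1 / real K" using tele[OF assms(2)] .
  finally show ?thesis by (simp add: dw_def)
qed

lemma harm_shift: "(\<Sum>j\<in>{1..<K}. 1 / real (Suc j)) + 1 = (\<Sum>j=1..K. 1 / real j)" if "1 \<le> K"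
  using that
proof (induction K rule: dec_induct)
  case base
  then show ?case by simp
next
  case (step K)
  have "(\<Sum>j\<in>{1..<Suc K}. 1 / real (Suc j)) = (\<Sum>j\<in>{1..<K}. 1 / real (Suc j)) + 1 / real (Suc K)"
    using step by simp
  then show ?case using step by simp
qed

lemma dw_weighted:
  assumes "1 \<le> K"
  shows "(\<Sum>j=1..K. dw K j * real j) = (\<Sum>j=1..K. 1 / real j)"
proof -
  have "{1..K} = insert K {1..<K}" using assms by auto
  then have "(\<Sum>j=1..K. dw K j * real j) = dw K K * real K + (\<Sum>j\<in>{1..<K}. dw K j * real j)" by simp
  also have "(\<Sum>j\<in>{1..<K}. dw K j * real j) = (\<Sum>j\<in>{1..<K}. 1 / real (Suc j))"
  proof (rule sum.cong[OF refl])
    fix j assume j: "j \<in> {1..<K}"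
    then have jp: "real j > 0" by simp
    have "dw K j * real j = (1 / real j - 1 / real (Suc j)) * real j" using j by (simp add: dw_def)
    also have "\<dots> = 1 - real j / real (Suc j)" using jp by (simp add: left_diff_distrib)
    also have "\<dots> = 1 / real (Suc j)" by (simp add: field_simps)
    finally show "dw K j * real j = 1 / real (Suc j)" .
  qed
  also have "dw K K * real K = 1" using assms by (simp add: dw_def)
  finally show ?thesis using harm_shift[OF assms] by simp
qed

lemma by_bound:
  fixes Q :: "nat \<Rightarrow> 'x \<Rightarrow> real" and q :: "nat \<Rightarrow> real"
  assumes "prob_space M"
    and sets: "\<And>i j. i < K \<Longrightarrow> j \<in> {1..K} \<Longrightarrow> {x \<in> space M. Q i x \<le> q j} \<in> sets M"
    and mono: "\<And>j j'. 1 \<le> j \<Longrightarrow> j \<le> j' \<Longrightarrow> q j \<le> q j'"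
    and bnd: "\<And>i j. i < K \<Longrightarrow> j \<in> {1..K} \<Longrightarrow> measure M {x \<in> space M. Q i x \<le> q j} \<le> \<beta> * real j"
    and K1: "1 \<le> K"
  shows "measure M {x \<in> space M. \<exists>j\<in>{1..K}. sort (map (\<lambda>i. Q i x) [0..<K]) ! (j - 1) \<le> q j}
           \<le> \<beta> * real K * (\<Sum>j=1..K. 1 / real j)"
proof -
  interpret prob_space M by fact
  define E where "E i j = {x \<in> space M. Q i x \<le> q j}" for i j
  define g where "g x = (\<Sum>i<K. \<Sum>j\<in>{1..K}. dw K j * indicator (E i j) x)" for x
  have Esets: "i < K \<Longrightarrow> j \<in> {1..K} \<Longrightarrow> E i j \<in> sets M" for i j unfolding E_def by (rule sets)
  have intE: "i < K \<Longrightarrow> j \<in> {1..K} \<Longrightarrow> integrable M (indicator (E i j) :: 'x \<Rightarrow> real)" for i j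
    using Esets by (intro integrable_real_indicator) (auto simp: emeasure_eq_measure)
  have int: "integrable M g"
  proof -
    have "integrable M (\<lambda>x. \<Sum>i<K. \<Sum>j\<in>{1..K}. dw K j * indicator (E i j) x)"
    proof (rule Bochner_Integration.integrable_sum)
      fix i assume i: "i \<in> {..<K}"
      show "integrable M (\<lambda>x. \<Sum>j\<in>{1..K}. dw K j * indicator (E i j) x)"
      proof (rule Bochner_Integration.integrable_sum)
        fix j assume j: "j \<in> {1..K}"
        show "integrable M (\<lambda>x. dw K j * indicator (E i j) x)"
          using intE[of i j] i j by simp
      qed
    qed
    then show ?thesis unfolding g_def[abs_def] .
  qed
  have gnn: "0 \<le> g x" for x
    unfolding g_def by (intro sum_nonneg mult_nonneg_nonneg dw_nonneg) auto
  have ge1: "1 \<le> g x" if x: "x \<in> space M" and ex: "\<exists>j\<in>{1..K}. sort (map (\<lambda>i. Q i x) [0..<K]) ! (j - 1) \<le> q j" for x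
  proof -
    obtain j0 where j0: "j0 \<in> {1..K}" "sort (map (\<lambda>i. Q i x) [0..<K]) ! (j0 - 1) \<le> q j0" using ex by blast
    define I where "I = {i. i < K \<and> Q i x \<le> q j0}"
    have cI: "j0 \<le> card I" unfolding I_def using bh_count[OF j0] .
    define h where "h i = (\<Sum>j\<in>{1..K}. dw K j * indicator (E i j) x)" for i
    have hnn: "0 \<le> h i" for i unfolding h_def by (intro sum_nonneg mult_nonneg_nonneg dw_nonneg) auto
    have hI: "1 / real j0 \<le> h i" if i: "i \<in> I" for i
    proof -
      have "(\<Sum>j\<in>{j0..K}. dw K j * indicator (E i j) x) = (\<Sum>j\<in>{j0..K}. dw K j)"
      proof (rule sum.cong[OF refl])
        fix j assume j: "j \<in> {j0..K}"
        have "Q i x \<le> q j0" using i by (simp add: I_def)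
        also have "q j0 \<le> q j" using j j0 by (intro mono) auto
        finally have "x \<in> E i j" using x by (simp add: E_def)
        then show "dw K j * indicator (E i j) x = dw K j" by simp
      qed
      also have "\<dots> = 1 / real j0" using j0 by (intro dw_tail) auto
      finally have eq: "(\<Sum>j\<in>{j0..K}. dw K j * indicator (E i j) x) = 1 / real j0" .
      have "(\<Sum>j\<in>{j0..K}. dw K j * indicator (E i j) x) \<le> h i"
        unfolding h_def using j0
        by (intro sum_mono2) (auto intro!: mult_nonneg_nonneg dw_nonneg)
      then show ?thesis using eq by simp
    qed
    have "(\<Sum>i\<in>I. h i) \<le> (\<Sum>i<K. h i)"
      using hnn by (intro sum_mono2) (auto simp: I_def)
    moreover have "(\<Sum>i\<in>I. 1 / real j0) \<le> (\<Sum>i\<in>I. h i)"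
      using hI by (rule sum_mono)
    moreover have "(\<Sum>i\<in>I. 1 / real j0) = real (card I) / real j0" by simp
    moreover have "1 \<le> real (card I) / real j0" using cI j0 by simp
    ultimately show ?thesis unfolding g_def h_def by linarith
  qed
  have gm[measurable]: "g \<in> borel_measurable M" using int by (rule borel_measurable_integrable)
  have "measure M {x \<in> space M. \<exists>j\<in>{1..K}. sort (map (\<lambda>i. Q i x) [0..<K]) ! (j - 1) \<le> q j}
      \<le> measure M {x \<in> space M. 1 \<le> g x}"
    using ge1 by (intro finite_measure_mono) auto
  also have "\<dots> \<le> (\<integral>x. g x \<partial>M) / 1"
    using int gnn by (intro integral_Markov_inequality_measure[where A="space M"]) auto
  also have "(\<integral>x. g x \<partial>M) = (\<Sum>i<K. \<Sum>j\<in>{1..K}. dw K j * measure M (E i j))"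
  proof -
    have "(\<integral>x. g x \<partial>M) = (\<Sum>i<K. \<integral>x. (\<Sum>j\<in>{1..K}. dw K j * indicator (E i j) x) \<partial>M)"
      unfolding g_def using intE by (intro Bochner_Integration.integral_sum Bochner_Integration.integrable_sum integrable_mult_right) auto
    also have "\<dots> = (\<Sum>i<K. \<Sum>j\<in>{1..K}. \<integral>x. dw K j * indicator (E i j) x \<partial>M)"
      using intE by (intro sum.cong[OF refl] Bochner_Integration.integral_sum integrable_mult_right) auto
    also have "\<dots> = (\<Sum>i<K. \<Sum>j\<in>{1..K}. dw K j * measure M (E i j))"
    proof (intro sum.cong[OF refl])
      fix i j assume "i \<in> {..<K}" "j \<in> {1..K}"
      then have "E i j \<subseteq> space M" by (auto simp: E_def)
      then show "(\<integral>x. dw K j * indicator (E i j) x \<partial>M) = dw K j * measure M (E i j)"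
        by (simp add: Int_absorb2)
    qed
    finally show ?thesis .
  qed
  also have "(\<Sum>i<K. \<Sum>j\<in>{1..K}. dw K j * measure M (E i j)) / 1
      \<le> (\<Sum>i<K. \<Sum>j\<in>{1..K}. dw K j * (\<beta> * real j))"
    unfolding div_by_1
    by (intro sum_mono mult_left_mono dw_nonneg) (auto simp: E_def intro: bnd)
  also have "\<dots> = (\<Sum>i<K. \<beta> * (\<Sum>j\<in>{1..K}. dw K j * real j))"
    by (simp add: sum_distrib_left mult.assoc mult.left_commute)
  also have "\<dots> = \<beta> * real K * (\<Sum>j=1..K. 1 / real j)"
    using dw_weighted[OF K1] by simp
  finally show ?thesis .
qed

definition psi :: "real \<Rightarrow> real \<Rightarrow> nat \<Rightarrow> nat \<Rightarrow> (nat \<times> nat) set \<Rightarrow> bool" where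
  "psi alpha eps K n Z =
     (let Qs = sort (map (\<lambda>i. (1 + real (card {k. k < n \<and> (i, k) \<in> Z})) / (1 + real n)) [0..<K])
      in \<exists>i\<in>{1..K}. Qs ! (i - 1) \<le> alpha * real i / (CK eps K * real K))"

lemma bh_psi:
  "bh_declare_ood alpha eps K s n cal x =
   psi alpha eps K n {(i, k). i < K \<and> k < n \<and> s i (cal k) \<ge> s i x}"
proof -
  have "map (\<lambda>i. conf_pval s n cal i x) [0..<K] =
        map (\<lambda>i. (1 + real (card {k. k < n \<and> (i, k) \<in> {(i, k). i < K \<and> k < n \<and> s i (cal k) \<ge> s i x}})) / (1 + real n)) [0..<K]"
  proof (rule map_cong[OF refl])
    fix i assume "i \<in> set [0..<K]"
    then have "i < K" by simp
    then have "{k. k < n \<and> (i, k) \<in> {(i, k). i < K \<and> k < n \<and> s i (cal k) \<ge> s i x}} = {j. j < n \<and> s i (cal j) \<ge> s i x}"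
      by auto
    then show "conf_pval s n cal i x = (1 + real (card {k. k < n \<and> (i, k) \<in> {(i, k). i < K \<and> k < n \<and> s i (cal k) \<ge> s i x}})) / (1 + real n)"
      by (simp add: conf_pval_def)
  qed
  note meq = this
  show ?thesis unfolding bh_declare_ood_def psi_def Let_def by (simp only: meq)
qed

lemma bh_measurable:
  fixes M :: "'x measure"
  assumes "prob_space M"
    and sm: "\<And>i. i < K \<Longrightarrow> s i \<in> borel_measurable M"
  shows "{cal \<in> space (PiM {..<n} (\<lambda>_. M)).
            measure M {x \<in> space M. bh_declare_ood alpha eps K s n cal x} \<le> alpha}
         \<in> sets (PiM {..<n} (\<lambda>_. M))"
proof -
  interpret prob_space M by fact
  let ?P = "PiM {..<n} (\<lambda>_. M)"
  define ZZ where "ZZ = {Z. Z \<subseteq> {..<K} \<times> {..<n} \<and> psi alpha eps K n Z}"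
  have finZZ: "finite ZZ" unfolding ZZ_def
    by (rule finite_subset[of _ "Pow ({..<K} \<times> {..<n})"]) auto
  have atom: "(\<lambda>\<omega>. s i (snd \<omega>) \<le> s i (fst \<omega> k)) \<in> measurable (?P \<Otimes>\<^sub>M M) (count_space (UNIV::bool set))" if i: "i < K" and k: "k < n" for i k
  proof -
    have "(\<lambda>\<omega>. fst \<omega> k) \<in> measurable (?P \<Otimes>\<^sub>M M) M"
      using k by (intro measurable_compose[OF measurable_fst measurable_component_singleton]) auto
    then have f2: "(\<lambda>\<omega>. s i (fst \<omega> k)) \<in> borel_measurable (?P \<Otimes>\<^sub>M M)"
      using sm[OF i] by (rule measurable_compose)
    have f1: "(\<lambda>\<omega>. s i (snd \<omega>)) \<in> borel_measurable (?P \<Otimes>\<^sub>M M)"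
      using measurable_snd sm[OF i] by (rule measurable_compose)
    have "{w \<in> space (?P \<Otimes>\<^sub>M M). s i (snd w) \<le> s i (fst w k)} \<in> sets (?P \<Otimes>\<^sub>M M)"
      using borel_measurable_le[OF f1 f2] .
    then show ?thesis by (subst Measurable.pred_def)
  qed
  define D where "D = {\<omega> \<in> space (?P \<Otimes>\<^sub>M M).
      \<exists>Z\<in>ZZ. \<forall>i\<in>{..<K}. \<forall>k\<in>{..<n}. ((i, k) \<in> Z) = (s i (snd \<omega>) \<le> s i (fst \<omega> k))}"
  have Dsets: "D \<in> sets (?P \<Otimes>\<^sub>M M)"
  proof -
    have "(\<lambda>\<omega>. \<exists>Z\<in>ZZ. \<forall>i\<in>{..<K}. \<forall>k\<in>{..<n}. ((i, k) \<in> Z) = (s i (snd \<omega>) \<le> s i (fst \<omega> k))) \<in> measurable (?P \<Otimes>\<^sub>M M) (count_space (UNIV::bool set))"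
      by (intro pred_intros_finite pred_intros_logic finZZ finite_lessThan atom measurable_const) auto
    then show ?thesis unfolding D_def by (simp add: Measurable.pred_def)
  qed
  have sec: "Pair cal -` D = {x \<in> space M. bh_declare_ood alpha eps K s n cal x}" if cal: "cal \<in> space ?P" for cal
  proof (intro set_eqI iffI)
    fix x assume "x \<in> Pair cal -` D"
    then have x: "x \<in> space M" and ex: "\<exists>Z\<in>ZZ. \<forall>i\<in>{..<K}. \<forall>k\<in>{..<n}. ((i, k) \<in> Z) = (s i x \<le> s i (cal k))"
      by (auto simp: D_def space_pair_measure)
    then obtain Z where Z: "Z \<in> ZZ" "\<forall>i\<in>{..<K}. \<forall>k\<in>{..<n}. ((i, k) \<in> Z) = (s i x \<le> s i (cal k))" by blast
    have "Z = {(i, k). i < K \<and> k < n \<and> s i (cal k) \<ge> s i x}"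
      using Z by (auto simp: ZZ_def)
    then have "psi alpha eps K n {(i, k). i < K \<and> k < n \<and> s i (cal k) \<ge> s i x}"
      using Z(1) by (simp add: ZZ_def)
    then show "x \<in> {x \<in> space M. bh_declare_ood alpha eps K s n cal x}" using x by (simp add: bh_psi)
  next
    fix x assume "x \<in> {x \<in> space M. bh_declare_ood alpha eps K s n cal x}"
    then have x: "x \<in> space M" and b: "psi alpha eps K n {(i, k). i < K \<and> k < n \<and> s i (cal k) \<ge> s i x}"
      by (auto simp: bh_psi)
    have "{(i, k). i < K \<and> k < n \<and> s i (cal k) \<ge> s i x} \<in> ZZ" using b by (auto simp: ZZ_def)
    moreover have "\<forall>i\<in>{..<K}. \<forall>k\<in>{..<n}. ((i, k) \<in> {(i, k). i < K \<and> k < n \<and> s i (cal k) \<ge> s i x}) = (s i x \<le> s i (cal k))"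
      by auto
    ultimately have "\<exists>Z\<in>ZZ. \<forall>i\<in>{..<K}. \<forall>k\<in>{..<n}. ((i, k) \<in> Z) = (s i x \<le> s i (cal k))" by blast
    then show "x \<in> Pair cal -` D" using x cal by (simp add: D_def space_pair_measure)
  qed
  have em: "(\<lambda>cal. emeasure M (Pair cal -` D)) \<in> borel_measurable ?P"
    by (rule measurable_emeasure_Pair[OF Dsets])
  then have "(\<lambda>cal. enn2real (emeasure M (Pair cal -` D))) \<in> borel_measurable ?P" by measurable
  then have "{cal \<in> space ?P. enn2real (emeasure M (Pair cal -` D)) \<le> alpha} \<in> sets ?P" by measurable
  moreover have "{cal \<in> space ?P. enn2real (emeasure M (Pair cal -` D)) \<le> alpha}
     = {cal \<in> space ?P. measure M {x \<in> space M. bh_declare_ood alpha eps K s n cal x} \<le> alpha}"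
    using sec by (auto simp: measure_def)
  ultimately show ?thesis by simp
qed

lemma bt_mono:
  assumes "j \<le> m" "0 \<le> c" "c \<le> p" "p \<le> 1"
  shows "bt m j c \<le> bt m j p"
proof (rule DERIV_nonneg_imp_nondecreasing[OF assms(3)])
  fix x assume x: "c \<le> x" "x \<le> p"
  show "\<exists>y. DERIV (bt m j) x :> y \<and> 0 \<le> y"
    using bt_deriv[OF assms(1), of x] x assms
    by (intro exI[of _ "real (Suc m) * real (m choose j) * x^j * (1-x)^(m-j)"] conjI) (auto intro!: mult_nonneg_nonneg)
qed

lemma card_pred_meas:
  fixes n :: nat
  assumes "\<And>k. k < n \<Longrightarrow> {x \<in> space M. P k x} \<in> sets M"
  shows "{x \<in> space M. R (card {k. k < n \<and> P k x})} \<in> sets M"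
proof -
  have atom: "(\<lambda>x. P k x) \<in> measurable M (count_space (UNIV :: bool set))" if "k \<in> {..<n}" for k
    using assms[of k] that by (simp add: Measurable.pred_def)
  have "(\<lambda>x. \<exists>S\<in>Pow {..<n}. R (card S) \<and> (\<forall>k\<in>{..<n}. (k \<in> S) = P k x))
      \<in> measurable M (count_space (UNIV :: bool set))"
  proof (rule pred_intros_finite(4))
    show "finite (Pow {..<n})" by simp
    fix S assume "S \<in> Pow {..<n}"
    show "(\<lambda>x. R (card S) \<and> (\<forall>k\<in>{..<n}. (k \<in> S) = P k x)) \<in> measurable M (count_space (UNIV :: bool set))"
    proof (rule pred_intros_logic(3))
      show "(\<lambda>x. R (card S)) \<in> measurable M (count_space (UNIV :: bool set))" by (rule measurable_const) simp
      show "(\<lambda>x. \<forall>k\<in>{..<n}. (k \<in> S) = P k x) \<in> measurable M (count_space (UNIV :: bool set))"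
      proof (rule pred_intros_finite(3))
        show "finite {..<n}" by simp
        fix k assume k: "k \<in> {..<n}"
        show "(\<lambda>x. (k \<in> S) = P k x) \<in> measurable M (count_space (UNIV :: bool set))"
          by (rule pred_intros_logic(6)) (rule measurable_const, simp, rule atom[OF k])
      qed
    qed
  qed
  then have hA: "{x \<in> space M. \<exists>S\<in>Pow {..<n}. R (card S) \<and> (\<forall>k\<in>{..<n}. (k \<in> S) = P k x)} \<in> sets M"
    by (rule predE)
  have hEq: "{x \<in> space M. \<exists>S\<in>Pow {..<n}. R (card S) \<and> (\<forall>k\<in>{..<n}. (k \<in> S) = P k x)}
      = {x \<in> space M. R (card {k. k < n \<and> P k x})}"
  proof -
    have "(\<exists>S\<in>Pow {..<n}. R (card S) \<and> (\<forall>k\<in>{..<n}. (k \<in> S) = P k x)) = R (card {k. k < n \<and> P k x})" for x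
    proof
      assume "\<exists>S\<in>Pow {..<n}. R (card S) \<and> (\<forall>k\<in>{..<n}. (k \<in> S) = P k x)"
      then obtain S where S: "S \<subseteq> {..<n}" "R (card S)" "\<forall>k\<in>{..<n}. (k \<in> S) = P k x" by auto
      have "S = {k. k < n \<and> P k x}" using S by auto
      then show "R (card {k. k < n \<and> P k x})" using S by simp
    next
      assume "R (card {k. k < n \<and> P k x})"
      then show "\<exists>S\<in>Pow {..<n}. R (card S) \<and> (\<forall>k\<in>{..<n}. (k \<in> S) = P k x)"
        by (intro bexI[of _ "{k. k < n \<and> P k x}"]) auto
    qed
    note pw = this
    show ?thesis by (rule Collect_cong, rule conj_cong[OF refl], rule pw)
  qed
  show ?thesis using hA unfolding hEq .
qed

lemma pval_iff:
  assumes "0 \<le> r"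
  shows "((1 + real C) / (1 + real n) \<le> r) = (1 + C \<le> nat \<lfloor>real (n + 1) * r\<rfloor>)"
proof -
  have "((1 + real C) / (1 + real n) \<le> r) = (real (1 + C) \<le> real (n + 1) * r)"
    by (simp add: divide_le_eq algebra_simps)
  also have "\<dots> = (int (1 + C) \<le> \<lfloor>real (n + 1) * r\<rfloor>)"
    using le_floor_iff[of "int (1 + C)" "real (n + 1) * r"] by simp
  also have "\<dots> = (1 + C \<le> nat \<lfloor>real (n + 1) * r\<rfloor>)"
  proof -
    have "0 \<le> \<lfloor>real (n + 1) * r\<rfloor>" using assms by simp
    then show ?thesis using le_nat_iff[of "\<lfloor>real (n + 1) * r\<rfloor>" "1 + C"] by simp
  qed
  finally show ?thesis .
qed

theorem theorem1:
  fixes M :: "'x measure" and s :: "nat \<Rightarrow> 'x \<Rightarrow> real"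
    and K n :: nat and alpha delta eps :: real
  assumes "prob_space M"
    and "\<And>i. i < K \<Longrightarrow> s i \<in> borel_measurable M"
    and "\<And>i t. i < K \<Longrightarrow> measure M {x \<in> space M. s i x = t} = 0"
    and "0 < alpha" and "alpha < 1" and "0 < delta" and "delta < 1" and "0 < eps"
    and "\<forall>j\<in>{1..K}. reg_inc_beta ((1 + eps) * mu_coef alpha eps K n j)
                      (a_coef alpha eps K n j) (b_coef alpha eps K n j)
                    \<ge> 1 - delta / real K ^ 2"
  shows "measure (PiM {..<n} (\<lambda>_. M))
           {cal \<in> space (PiM {..<n} (\<lambda>_. M)).
              measure M {x \<in> space M. bh_declare_ood alpha eps K s n cal x} \<le> alpha}
         \<ge> 1 - delta"
proof -
  note pM = assms(1) and sm = assms(2) and atom = assms(3)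
  note al0 = assms(4) and al1 = assms(5) and de0 = assms(6) and ep0 = assms(8) and hyp = assms(9)
  interpret prob_space M by (rule pM)
  let ?P = "PiM {..<n} (\<lambda>_. M)"
  interpret PP: prob_space ?P by (rule prob_space_PiM) (rule pM)
  define T where "T = {cal \<in> space ?P. measure M {x \<in> space M. bh_declare_ood alpha eps K s n cal x} \<le> alpha}"
  have Tsets: "T \<in> sets ?P" unfolding T_def by (rule bh_measurable[OF pM sm])
  show ?thesis
  proof (cases "K = 0")
    case True
    then have "\<And>cal x. \<not> bh_declare_ood alpha eps K s n cal x" by (simp add: bh_declare_ood_def)
    then have "T = space ?P" unfolding T_def using al0 by simp
    then show ?thesis using de0 unfolding T_def[symmetric] by (simp add: PP.prob_space)
  next
    case False
    then have K1: "1 \<le> K" by simp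
    have Kpos: "real K > 0" using K1 by simp
    define H where "H = (\<Sum>j=1..K. 1 / real j)"
    have H1: "1 \<le> H"
    proof -
      have "1 / real (1::nat) \<le> (\<Sum>j=1..K. 1 / real j)"
        using K1 by (intro member_le_sum) auto
      then show ?thesis by (simp add: H_def)
    qed
    have CKeq: "CK eps K = (1 + eps) * H" by (simp add: CK_def H_def)
    have CK1: "1 < CK eps K"
    proof -
      have "1 * 1 < (1 + eps) * H" using H1 ep0 by (intro mult_less_le_imp_less) auto
      then show ?thesis using CKeq by simp
    qed
    define r where "r j = alpha * real j / (CK eps K * real K)" for j
    have r_nonneg: "0 \<le> r j" for j unfolding r_def using al0 CK1 by simp
    have r_lt: "real (n + 1) * r j < real (n + 1)" if "j \<le> K" for j
    proof -
      have "alpha * real j \<le> alpha * real K" using that al0 by simp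
      also have "\<dots> < 1 * real K" using al1 Kpos by simp
      also have "\<dots> < CK eps K * real K" using CK1 Kpos by simp
      finally have "r j < 1" unfolding r_def using CK1 Kpos by (simp add: divide_less_eq)
      then show ?thesis by simp
    qed
    have r_mono: "r j \<le> r j'" if "j \<le> j'" for j j'
      unfolding r_def using that al0 CK1 Kpos by (intro divide_right_mono mult_left_mono) auto
    define a where "a j = a_coef alpha eps K n j" for j
    have a_eq: "a j = nat \<lfloor>real (n + 1) * r j\<rfloor>" for j unfolding a_def a_coef_def r_def ..
    have a_le: "a j \<le> n" if "j \<le> K" for j
    proof -
      have "\<lfloor>real (n + 1) * r j\<rfloor> < int (n + 1)"
        using r_lt[OF that] by (simp add: floor_less_iff)
      then show ?thesis unfolding a_eq by linarith
    qed
    have a_le_r: "real (a j) \<le> real (n + 1) * r j" for j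
    proof -
      have "0 \<le> \<lfloor>real (n + 1) * r j\<rfloor>" using r_nonneg[of j] by simp
      then have "real (a j) = real_of_int \<lfloor>real (n + 1) * r j\<rfloor>" unfolding a_eq by simp
      also have "\<dots> \<le> real (n + 1) * r j" by (rule of_int_floor_le)
      finally show ?thesis .
    qed
    define c where "c j = (1 + eps) * mu_coef alpha eps K n j" for j
    have c_eq: "c j = (1 + eps) * real (a j) / real (n + 1)" if "j \<le> K" for j
    proof -
      have "a_coef alpha eps K n j + b_coef alpha eps K n j = n + 1"
        using a_le[OF that] unfolding b_coef_def a_def by simp
      then show ?thesis unfolding c_def mu_coef_def a_def by simp
    qed
    have c_nonneg: "0 \<le> c j" if "j \<le> K" for j using c_eq[OF that] ep0 by simp
    have c_le: "c j \<le> (1 + eps) * r j" if "j \<le> K" for j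
    proof -
      have "real (a j) / real (n + 1) \<le> r j" using a_le_r[of j] by (simp add: divide_le_eq mult.commute)
      then show ?thesis unfolding c_eq[OF that] using ep0
        by (simp add: mult.assoc mult_left_mono times_divide_eq_right[symmetric] del: times_divide_eq_right)
    qed
    have breg: "1 - delta / real K ^ 2 \<le> reg_inc_beta (c j) (a j) (n + 1 - a j)" if "j \<in> {1..K}" for j
      using hyp that unfolding c_def a_def b_coef_def by auto
    define Y where "Y i j = {x \<in> space M. surv M (s i) (s i x) \<le> c j}" for i j
    have Ysets: "Y i j \<in> sets M" if "i < K" for i j
      unfolding Y_def by (rule pit_set_sets[OF pM sm[OF that]])
    define GG where "GG i j = {cal \<in> space ?P. a j \<le> card {k. k < n \<and> cal k \<in> Y i j}}" for i j
    define B where "B i j = space ?P - GG i j" for i j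
    have GGsets: "GG i j \<in> sets ?P" if "i < K" for i j
      unfolding GG_def by (rule count_binom(1)[OF pM Ysets[OF that]])
    have Bsets: "B i j \<in> sets ?P" if "i < K" for i j
      unfolding B_def using GGsets[OF that] by auto
    have Bmeas: "measure ?P (B i j) \<le> delta / real K ^ 2" if i: "i < K" and j: "j \<in> {1..K}" for i j
    proof -
      have jK: "j \<le> K" using j by simp
      have dpos: "0 \<le> delta / real K ^ 2" using de0 by simp
      show ?thesis
      proof (cases "a j = 0")
        case True
        then have "GG i j = space ?P" by (simp add: GG_def)
        then have "B i j = {}" by (simp add: B_def)
        then show ?thesis using dpos by simp
      next
        case aNZ: False
        show ?thesis
        proof (cases "1 \<le> c j")
          case True
          have "Y i j = space M"
          proof -
            have "surv M (s i) t \<le> c j" for t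
              using True prob_le_1[of "{x \<in> space M. t \<le> s i x}"] unfolding surv_def by linarith
            then show ?thesis by (auto simp: Y_def)
          qed
          have "GG i j = space ?P"
          proof -
            have "a j \<le> card {k. k < n \<and> cal k \<in> Y i j}" if cal: "cal \<in> space ?P" for cal
            proof -
              have "{k. k < n \<and> cal k \<in> Y i j} = {..<n}"
                using cal \<open>Y i j = space M\<close> by (auto simp: space_PiM PiE_iff)
              then show ?thesis using a_le[OF jK] by simp
            qed
            then show ?thesis by (auto simp: GG_def)
          qed
          then have "B i j = {}" by (simp add: B_def)
          then show ?thesis using dpos by simp
        next
          case False
          then have c1: "c j < 1" by simp
          have a1: "1 \<le> a j" using aNZ by simp
          have c0: "0 < c j" using c_eq[OF jK] a1 ep0 by simp
          define jj where "jj = a j - 1"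
          define m where "m = n - 1"
          have ajj: "a j = Suc jj" using a1 by (simp add: jj_def)
          have nm: "n = Suc m" using a1 a_le[OF jK] by (simp add: m_def)
          have jjm: "jj \<le> m" using a_le[OF jK] ajj nm by simp
          define p where "p = measure M (Y i j)"
          have pc: "c j \<le> p" unfolding p_def Y_def
            by (rule pit[OF pM sm[OF i] atom[OF i] c0 c1])
          have p1: "p \<le> 1" unfolding p_def by (rule prob_le_1)
          have mGG: "measure ?P (GG i j) = bt m jj p"
          proof -
            have "measure ?P (GG i j) = (\<Sum>t=a j..n. real (n choose t) * p ^ t * (1 - p) ^ (n - t))"
              unfolding GG_def p_def by (rule count_binom(2)[OF pM Ysets[OF i]])
            then show ?thesis unfolding bt_def using ajj nm by simp
          qed
          have "bt m jj (c j) \<le> bt m jj p"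
            using jjm c0 pc p1 by (intro bt_mono) auto
          moreover have "reg_inc_beta (c j) (a j) (n + 1 - a j) = bt m jj (c j)"
          proof -
            have "n + 1 - a j = Suc (m - jj)" using ajj nm jjm by simp
            then show ?thesis using ajj reg_inc_beta_bt[OF jjm c0 c1] by simp
          qed
          ultimately have "1 - delta / real K ^ 2 \<le> measure ?P (GG i j)"
            using breg[OF j] mGG by simp
          moreover have "measure ?P (B i j) = 1 - measure ?P (GG i j)"
            unfolding B_def using GGsets[OF i] by (simp add: PP.prob_compl)
          ultimately show ?thesis by simp
        qed
      qed
    qed
    define U where "U = (\<Union>ij\<in>{..<K} \<times> {1..K}. B (fst ij) (snd ij))"
    have Usets: "U \<in> sets ?P" unfolding U_def using Bsets by auto
    have Umeas: "measure ?P U \<le> delta"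
    proof -
      have "measure ?P U \<le> (\<Sum>ij\<in>{..<K} \<times> {1..K}. measure ?P (B (fst ij) (snd ij)))"
        unfolding U_def using Bsets by (intro PP.finite_measure_subadditive_finite) auto
      also have "\<dots> \<le> (\<Sum>ij\<in>{..<K} \<times> {1..K}. delta / real K ^ 2)"
        using Bmeas by (intro sum_mono) auto
      also have "\<dots> = real K * real K * (delta / real K ^ 2)" by simp
      also have "\<dots> = delta" using Kpos by (simp add: power2_eq_square)
      finally show ?thesis .
    qed
    define G where "G = space ?P - U"
    define \<beta> where "\<beta> = (1 + eps) * alpha / (CK eps K * real K)"
    have beta_r: "(1 + eps) * r j = \<beta> * real j" for j
      unfolding r_def \<beta>_def by simp
    have beta_fin: "\<beta> * real K * H = alpha"
    proof -
      have CKnz: "CK eps K \<noteq> 0" using CK1 by simp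
      have e1: "\<beta> * real K = (1 + eps) * alpha / CK eps K"
        unfolding \<beta>_def using Kpos by simp
      have "\<beta> * real K * H = alpha * ((1 + eps) * H) / CK eps K"
        unfolding e1 by simp
      also have "\<dots> = alpha" unfolding CKeq[symmetric] using CKnz by simp
      finally show ?thesis .
    qed
    have GT: "G \<subseteq> T"
    proof
      fix cal assume cal: "cal \<in> G"
      then have calsp: "cal \<in> space ?P" by (simp add: G_def)
      have notB: "cal \<notin> B i j" if "i < K" "j \<in> {1..K}" for i j
        using cal that unfolding G_def U_def by force
      have ck: "cal k \<in> space M" if "k < n" for k
        using calsp that by (auto simp: space_PiM PiE_iff)
      have cnt: "a j \<le> card {k. k < n \<and> surv M (s i) (s i (cal k)) \<le> c j}"
        if i: "i < K" and j: "j \<in> {1..K}" for i j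
      proof -
        have "cal \<in> GG i j" using notB[OF i j] calsp by (simp add: B_def)
        then have "a j \<le> card {k. k < n \<and> cal k \<in> Y i j}" by (simp add: GG_def)
        moreover have "{k. k < n \<and> cal k \<in> Y i j} = {k. k < n \<and> surv M (s i) (s i (cal k)) \<le> c j}"
          using ck by (auto simp: Y_def)
        ultimately show ?thesis by simp
      qed
      have seteq: "{x \<in> space M. conf_pval s n cal i x \<le> r j}
          = {x \<in> space M. 1 + card {jj. jj < n \<and> s i (cal jj) \<ge> s i x} \<le> a j}" for i j
        unfolding conf_pval_def a_eq using pval_iff[OF r_nonneg[of j]] by simp
      have setsQ: "{x \<in> space M. conf_pval s n cal i x \<le> r j} \<in> sets M" if i: "i < K" for i j
        unfolding seteq
      proof (rule card_pred_meas)
        fix k assume "k < n"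
        show "{x \<in> space M. s i x \<le> s i (cal k)} \<in> sets M"
        proof -
          have cm: "(\<lambda>x. s i (cal k)) \<in> borel_measurable M" by simp
          show ?thesis using borel_measurable_le[OF sm[OF i] cm] by simp
        qed
      qed
      have bndQ: "measure M {x \<in> space M. conf_pval s n cal i x \<le> r j} \<le> \<beta> * real j"
        if i: "i < K" and j: "j \<in> {1..K}" for i j
      proof -
        have jK: "j \<le> K" using j by simp
        have "measure M {x \<in> space M. conf_pval s n cal i x \<le> r j} \<le> c j"
          unfolding seteq by (rule good_bound[OF pM sm[OF i] cnt[OF i j] c_nonneg[OF jK]])
        also have "\<dots> \<le> (1 + eps) * r j" by (rule c_le[OF jK])
        finally show ?thesis unfolding beta_r .
      qed
      have "measure M {x \<in> space M. \<exists>j\<in>{1..K}. sort (map (\<lambda>i. conf_pval s n cal i x) [0..<K]) ! (j - 1) \<le> r j}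
          \<le> \<beta> * real K * (\<Sum>j=1..K. 1 / real j)"
        by (rule by_bound[OF pM setsQ r_mono bndQ K1])
      moreover have "{x \<in> space M. \<exists>j\<in>{1..K}. sort (map (\<lambda>i. conf_pval s n cal i x) [0..<K]) ! (j - 1) \<le> r j}
          = {x \<in> space M. bh_declare_ood alpha eps K s n cal x}"
        by (simp add: bh_declare_ood_def r_def)
      ultimately have "measure M {x \<in> space M. bh_declare_ood alpha eps K s n cal x} \<le> alpha"
        using beta_fin unfolding H_def by simp
      then show "cal \<in> T" using calsp by (simp add: T_def)
    qed
    have "1 - delta \<le> 1 - measure ?P U" using Umeas by simp
    also have "\<dots> = measure ?P G" unfolding G_def using Usets by (simp add: PP.prob_compl)
    also have "\<dots> \<le> measure ?P T" using GT Tsets by (rule PP.finite_measure_mono)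
    finally show ?thesis unfolding T_def .
  qed
qed

end
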